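(* Let $\alpha>-1/2$. There is a constant $C$ depending only on $\alpha$ such that for every $\varepsilon\in(0,1)$ and every $(\varepsilon,\alpha)$-thin set $S\subset\mathbb{R}^+$ the following hold: if $a\ge1$ and $b-a\ge\frac1a$, then $$\mu_\alpha(S\cap[a,b])\le C\varepsilon\,\mu_\alpha([a,b]);$$ and if $b>1$, then $$\mu_\alpha(S\cap[0,b])\le C\varepsilon\,\mu_\alpha([0,b]).$$
   Context: Fix $\alpha>-1/2$ and let $d\mu_\alpha(x)=(2\pi)^{\alpha+1}x^{2\alpha+1}\,dx$ on $\mathbb{R}^+=[0,\infty)$. For $\varepsilon\in(0,1)$, a measurable set $S\subset\mathbb{R}^+$ is called $(\varepsilon,\alpha)$-thin if $\mu_\alpha(S\cap[x,x+1])\le\varepsilon\,\mu_\alpha([x,x+1])$ for all $0\le x\le1$, and $\mu_\alpha(S\cap[x,x+\frac1x])\le\varepsilon\,\mu_\alpha([x,x+\frac1x])$ for all $x\ge2$. *)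

theory Defs
  imports "HOL-Analysis.Analysis"
begin

definition mu :: "real \<Rightarrow> real measure" where
  "mu \<alpha> = density lborel
     (\<lambda>x. ennreal (indicator {0..} x * (2 * pi) powr (\<alpha> + 1) * x powr (2 * \<alpha> + 1)))"

definition thin :: "real \<Rightarrow> real \<Rightarrow> real set \<Rightarrow> bool" where
  "thin \<epsilon> \<alpha> S \<longleftrightarrow>
     S \<subseteq> {0..} \<and> S \<in> sets lborel \<and>
     (\<forall>x. 0 \<le> x \<and> x \<le> 1 \<longrightarrow>
        measure (mu \<alpha>) (S \<inter> {x..x+1}) \<le> \<epsilon> * measure (mu \<alpha>) {x..x+1}) \<and>
     (\<forall>x. x \<ge> 2 \<longrightarrow>
        measure (mu \<alpha>) (S \<inter> {x..x + 1/x}) \<le> \<epsilon> * measure (mu \<alpha>) {x..x + 1/x})"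

end

theory Submission imports Defs begin

lemma int_interval:
  fixes p x y :: real
  assumes p: "p > -1" and x: "0 \<le> x" and xy: "x \<le> y"
  shows "((\<lambda>t. t powr p) has_integral (y powr (p+1) / (p+1) - x powr (p+1) / (p+1))) {x..y}"
proof -
  have I0x: "((\<lambda>t. t powr p) has_integral (x powr (p+1) / (p+1))) {0..x}"
    using has_integral_powr_from_0[OF p x] .
  have I0y: "((\<lambda>t. t powr p) has_integral (y powr (p+1) / (p+1))) {0..y}"
    using has_integral_powr_from_0[OF p] x xy by simp
  have "(\<lambda>t. t powr p) integrable_on {x..y}"
    using integrable_subinterval_real[OF has_integral_integrable[OF I0y]] x by simp
  then obtain J where J: "((\<lambda>t. t powr p) has_integral J) {x..y}" by blast
  have "((\<lambda>t. t powr p) has_integral (x powr (p+1) / (p+1) + J)) {0..y}"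
    using has_integral_combine[OF x xy I0x J] by simp
  then have "x powr (p+1) / (p+1) + J = y powr (p+1) / (p+1)"
    using I0y by (rule has_integral_unique)
  then have "J = y powr (p+1) / (p+1) - x powr (p+1) / (p+1)" by simp
  with J show ?thesis by simp
qed

lemma emeas_interval:
  assumes a: "\<alpha> > -1/2" and x: "0 \<le> x" and xy: "x \<le> y"
  shows "emeasure (mu \<alpha>) {x..y} = ennreal ((2*pi) powr (\<alpha>+1) * (y powr (2*\<alpha>+2) / (2*\<alpha>+2) - x powr (2*\<alpha>+2) / (2*\<alpha>+2)))"
proof -
  define c where "c = (2*pi) powr (\<alpha>+1)"
  have c: "c > 0" unfolding c_def by simp
  define g where "g = (\<lambda>t. if t \<in> {x..y} then c * t powr (2*\<alpha>+1) else 0)"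
  have "emeasure (mu \<alpha>) {x..y} = (\<integral>\<^sup>+ t. ennreal (indicator {0..} t * c * t powr (2*\<alpha>+1)) * indicator {x..y} t \<partial>lborel)"
    unfolding mu_def c_def by (subst emeasure_density) auto
  also have "\<dots> = (\<integral>\<^sup>+ t. ennreal (g t) \<partial>lborel)"
    using x by (intro nn_integral_cong) (auto simp: g_def indicator_def)
  also have "\<dots> = ennreal (c * (y powr (2*\<alpha>+2) / (2*\<alpha>+2) - x powr (2*\<alpha>+2) / (2*\<alpha>+2)))"
  proof (rule nn_integral_has_integral_lborel)
    show "g \<in> borel_measurable borel" unfolding g_def by measurable
    show "0 \<le> g t" for t unfolding g_def using c by (auto simp: indicator_def)
    have "((\<lambda>t. c * t powr (2*\<alpha>+1)) has_integral c * (y powr (2*\<alpha>+1+1) / (2*\<alpha>+1+1) - x powr (2*\<alpha>+1+1) / (2*\<alpha>+1+1))) {x..y}"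
      by (rule has_integral_mult_right[OF int_interval[of "2*\<alpha>+1" x y]]) (use a x xy in linarith)+
    then have "((\<lambda>t. c * t powr (2*\<alpha>+1)) has_integral c * (y powr (2*\<alpha>+2) / (2*\<alpha>+2) - x powr (2*\<alpha>+2) / (2*\<alpha>+2))) {x..y}"
      by (simp add: add.assoc)
    then show "(g has_integral c * (y powr (2*\<alpha>+2) / (2*\<alpha>+2) - x powr (2*\<alpha>+2) / (2*\<alpha>+2))) UNIV"
      unfolding g_def by (subst has_integral_restrict_UNIV)
  qed
  finally show ?thesis unfolding c_def .
qed

definition Fm :: "real \<Rightarrow> real \<Rightarrow> real" where
  "Fm \<alpha> t = (2*pi) powr (\<alpha>+1) * (t powr (2*\<alpha>+2) / (2*\<alpha>+2))"

lemma Fm_mono: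
  assumes a: "\<alpha> > -1/2" and x: "0 \<le> x" and xy: "x \<le> y"
  shows "Fm \<alpha> x \<le> Fm \<alpha> y"
proof -
  have "x powr (2*\<alpha>+2) \<le> y powr (2*\<alpha>+2)" using powr_mono2[of "2*\<alpha>+2" x y] a x xy by linarith
  then have "x powr (2*\<alpha>+2) / (2*\<alpha>+2) \<le> y powr (2*\<alpha>+2) / (2*\<alpha>+2)"
    using a by (intro divide_right_mono) auto
  then show ?thesis unfolding Fm_def by (intro mult_left_mono) auto
qed

lemma emeas_interval':
  assumes a: "\<alpha> > -1/2" and x: "0 \<le> x" and xy: "x \<le> y"
  shows "emeasure (mu \<alpha>) {x..y} = ennreal (Fm \<alpha> y - Fm \<alpha> x)"
  using emeas_interval[OF a x xy] unfolding Fm_def by (simp add: right_diff_distrib)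

lemma meas_interval:
  assumes a: "\<alpha> > -1/2" and x: "0 \<le> x" and xy: "x \<le> y"
  shows "measure (mu \<alpha>) {x..y} = Fm \<alpha> y - Fm \<alpha> x"
  using emeas_interval'[OF a x xy] Fm_mono[OF a x xy] unfolding measure_def by simp

lemma fmeas_interval:
  assumes a: "\<alpha> > -1/2" and x: "0 \<le> x"
  shows "{x..y} \<in> fmeasurable (mu \<alpha>)"
proof (cases "x \<le> y")
  case True
  show ?thesis
  proof (rule fmeasurableI)
    show "{x..y} \<in> sets (mu \<alpha>)" by (simp add: mu_def)
    show "emeasure (mu \<alpha>) {x..y} < \<infinity>" by (simp add: emeas_interval'[OF a x True])
  qed
next
  case False
  then show ?thesis by (auto intro: fmeasurableI simp: mu_def)
qed

lemma meas_mono: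
  assumes a: "\<alpha> > -1/2" and u: "0 \<le> u" and A: "A \<in> sets lborel" and AB: "A \<subseteq> B" and B: "B \<subseteq> {u..v}"
   and Bm: "B \<in> sets lborel"
  shows "measure (mu \<alpha>) A \<le> measure (mu \<alpha>) B"
proof (rule measure_mono_fmeasurable[OF AB])
  show "A \<in> sets (mu \<alpha>)" using A by (simp add: mu_def)
  show "B \<in> fmeasurable (mu \<alpha>)" 
    by (rule fmeasurableI2[OF fmeas_interval[OF a u] B]) (use Bm in \<open>simp add: mu_def\<close>)
qed

lemma meas_Un:
  assumes "B \<in> sets lborel" "C \<in> sets lborel"
  shows "measure (mu \<alpha>) (B \<union> C) \<le> measure (mu \<alpha>) B + measure (mu \<alpha>) C"
  by (rule measure_Un_le) (use assms in \<open>auto simp: mu_def\<close>)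

lemma thin_sets: assumes "thin \<epsilon> \<alpha> S" shows "S \<in> sets lborel"
  using assms unfolding thin_def by (elim conjE) assumption

lemma thin_bigD: assumes "thin \<epsilon> \<alpha> S"
  shows "\<forall>x. x \<ge> 2 \<longrightarrow>
        measure (mu \<alpha>) (S \<inter> {x..x + 1/x}) \<le> \<epsilon> * measure (mu \<alpha>) {x..x + 1/x}"
  using assms unfolding thin_def by (elim conjE) assumption

lemma thin_smallD: assumes "thin \<epsilon> \<alpha> S"
  shows "\<forall>x. 0 \<le> x \<and> x \<le> 1 \<longrightarrow>
        measure (mu \<alpha>) (S \<inter> {x..x+1}) \<le> \<epsilon> * measure (mu \<alpha>) {x..x+1}"
  using assms unfolding thin_def by (elim conjE) assumption

lemma thin_big:
  assumes a: "\<alpha> > -1/2" and th: "thin \<epsilon> \<alpha> S" and x: "2 \<le> x"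
  shows "measure (mu \<alpha>) (S \<inter> {x..x+1/x}) \<le> \<epsilon> * (Fm \<alpha> (x+1/x) - Fm \<alpha> x)"
proof -
  have "measure (mu \<alpha>) (S \<inter> {x..x+1/x}) \<le> \<epsilon> * measure (mu \<alpha>) {x..x+1/x}"
    using thin_bigD[OF th] x by blast
  moreover have "measure (mu \<alpha>) {x..x+1/x} = Fm \<alpha> (x+1/x) - Fm \<alpha> x"
    by (rule meas_interval[OF a]) (use x in auto)
  ultimately show ?thesis by simp
qed

lemma thin_small:
  assumes a: "\<alpha> > -1/2" and th: "thin \<epsilon> \<alpha> S" and x: "0 \<le> x" "x \<le> 1"
  shows "measure (mu \<alpha>) (S \<inter> {x..x+1}) \<le> \<epsilon> * (Fm \<alpha> (x+1) - Fm \<alpha> x)"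
proof -
  have "measure (mu \<alpha>) (S \<inter> {x..x+1}) \<le> \<epsilon> * measure (mu \<alpha>) {x..x+1}"
    using thin_smallD[OF th] x by blast
  moreover have "measure (mu \<alpha>) {x..x+1} = Fm \<alpha> (x+1) - Fm \<alpha> x"
    by (rule meas_interval[OF a]) (use x in auto)
  ultimately show ?thesis by simp
qed

lemma greedy:
  assumes a: "\<alpha> > -1/2" and th: "thin \<epsilon> \<alpha> S" and e: "0 < \<epsilon>"
    and s: "2 \<le> s" and sb: "s \<le> b"
  shows "\<exists>t. b \<le> t \<and> t \<le> b + 1/s \<and> measure (mu \<alpha>) (S \<inter> {s..b}) \<le> \<epsilon> * (Fm \<alpha> t - Fm \<alpha> s)"
proof -
  have Sm: "S \<in> sets lborel" using thin_sets[OF th] .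
  have b0: "b > 0" using s sb by linarith
  have main: "\<forall>s. 2 \<le> s \<and> s \<le> b \<and> b - s \<le> real n / b \<longrightarrow>
     (\<exists>t. b \<le> t \<and> t \<le> b + 1/s \<and> measure (mu \<alpha>) (S \<inter> {s..b}) \<le> \<epsilon> * (Fm \<alpha> t - Fm \<alpha> s))" for n
  proof (induction n)
    case 0
    show ?case
    proof (intro allI impI)
      fix s assume h: "2 \<le> s \<and> s \<le> b \<and> b - s \<le> real 0 / b"
      then have sb': "s = b" by auto
      have ps: "0 \<le> 1/s" using h by simp
      have "measure (mu \<alpha>) (S \<inter> {s..b}) \<le> measure (mu \<alpha>) (S \<inter> {s..s+1/s})"
      proof (rule meas_mono[OF a, of s _ _ "s+1/s"])
        have "s \<le> s + 1/s" using h by simp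
        then have "b \<le> s + 1/s" using sb' by linarith
        then have "{s..b} \<subseteq> {s..s+1/s}" by auto
        then show "S \<inter> {s..b} \<subseteq> S \<inter> {s..s+1/s}" by blast
      qed (use h Sm in auto)
      also have "\<dots> \<le> \<epsilon> * (Fm \<alpha> (s+1/s) - Fm \<alpha> s)" using thin_big[OF a th] h by auto
      finally show "\<exists>t. b \<le> t \<and> t \<le> b + 1/s \<and> measure (mu \<alpha>) (S \<inter> {s..b}) \<le> \<epsilon> * (Fm \<alpha> t - Fm \<alpha> s)"
        using sb' h by (intro exI[of _ "s+1/s"]) auto
    qed
  next
    case (Suc n)
    show ?case
    proof (intro allI impI)
      fix s assume h: "2 \<le> s \<and> s \<le> b \<and> b - s \<le> real (Suc n) / b"
      show "\<exists>t. b \<le> t \<and> t \<le> b + 1/s \<and> measure (mu \<alpha>) (S \<inter> {s..b}) \<le> \<epsilon> * (Fm \<alpha> t - Fm \<alpha> s)"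
      proof (cases "b \<le> s + 1/s")
        case True
        have "measure (mu \<alpha>) (S \<inter> {s..b}) \<le> measure (mu \<alpha>) (S \<inter> {s..s+1/s})"
          by (rule meas_mono[OF a, of s _ _ "s+1/s"]) (use h Sm True in auto)
        also have "\<dots> \<le> \<epsilon> * (Fm \<alpha> (s+1/s) - Fm \<alpha> s)" using thin_big[OF a th] h by auto
        finally show ?thesis using True h by (intro exI[of _ "s+1/s"]) auto
      next
        case False
        define s' where "s' = s + 1/s"
        have s0: "s > 0" using h by auto
        have "1/b \<le> 1/s" using h s0 by (intro divide_left_mono) auto
        then have "b - s' \<le> real n / b" using h unfolding s'_def by (simp add: add_divide_distrib)
        moreover have ps: "0 \<le> 1/s" using s0 by simp
        moreover have "2 \<le> s'" "s' \<le> b" using False h ps unfolding s'_def by linarith+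
        ultimately obtain t where t: "b \<le> t" "t \<le> b + 1/s'"
          "measure (mu \<alpha>) (S \<inter> {s'..b}) \<le> \<epsilon> * (Fm \<alpha> t - Fm \<alpha> s')"
          using Suc.IH by blast
        have ss': "s \<le> s'" using ps unfolding s'_def by linarith
        have sp: "0 < s'" using ss' s0 by linarith
        have "1/s' \<le> 1/s" by (rule divide_left_mono) (use ss' s0 sp in \<open>auto intro: mult_pos_pos\<close>)
        then have t2: "t \<le> b + 1/s" using t by linarith
        have "measure (mu \<alpha>) (S \<inter> {s..b}) \<le> measure (mu \<alpha>) ((S \<inter> {s..s'}) \<union> (S \<inter> {s'..b}))"
          by (rule meas_mono[OF a, of s _ _ b]) (use h Sm ss' \<open>s' \<le> b\<close> in auto)
        also have "\<dots> \<le> measure (mu \<alpha>) (S \<inter> {s..s'}) + measure (mu \<alpha>) (S \<inter> {s'..b})"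
          by (rule meas_Un) (use Sm in auto)
        also have "\<dots> \<le> \<epsilon> * (Fm \<alpha> s' - Fm \<alpha> s) + \<epsilon> * (Fm \<alpha> t - Fm \<alpha> s')"
          using thin_big[OF a th, of s] h t(3) unfolding s'_def by auto
        also have "\<dots> = \<epsilon> * (Fm \<alpha> t - Fm \<alpha> s)" by (simp add: algebra_simps)
        finally show ?thesis using t(1) t2 by blast
      qed
    qed
  qed
  obtain n where "(b - s) * b \<le> real n" using real_arch_simple by blast
  then have "b - s \<le> real n / b" using b0 by (simp add: pos_le_divide_eq)
  then show ?thesis using main[of n] s sb by blast
qed

lemma initial:
  assumes a: "\<alpha> > -1/2" and th: "thin \<epsilon> \<alpha> S" and e: "0 < \<epsilon>" and B: "2 \<le> B"
  shows "\<exists>t. B \<le> t \<and> t \<le> B + 1/2 \<and> measure (mu \<alpha>) (S \<inter> {0..B}) \<le> \<epsilon> * Fm \<alpha> t"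
proof -
  have Sm: "S \<in> sets lborel" using thin_sets[OF th] .
  obtain t where t: "B \<le> t" "t \<le> B + 1/2" "measure (mu \<alpha>) (S \<inter> {2..B}) \<le> \<epsilon> * (Fm \<alpha> t - Fm \<alpha> 2)"
    using greedy[OF a th e _ B] by auto
  have F0: "Fm \<alpha> 0 = 0" unfolding Fm_def by simp
  have "measure (mu \<alpha>) (S \<inter> {0..B}) \<le> measure (mu \<alpha>) (((S \<inter> {0..1}) \<union> (S \<inter> {1..2})) \<union> (S \<inter> {2..B}))"
    by (rule meas_mono[OF a, of 0 _ _ B]) (use B Sm in auto)
  also have "\<dots> \<le> measure (mu \<alpha>) ((S \<inter> {0..1}) \<union> (S \<inter> {1..2})) + measure (mu \<alpha>) (S \<inter> {2..B})"
    by (rule meas_Un) (use Sm in auto)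
  also have "\<dots> \<le> (measure (mu \<alpha>) (S \<inter> {0..1}) + measure (mu \<alpha>) (S \<inter> {1..2})) + measure (mu \<alpha>) (S \<inter> {2..B})"
    using meas_Un[of "S \<inter> {0..1}" "S \<inter> {1..2}" \<alpha>] Sm by auto
  also have "\<dots> \<le> (\<epsilon> * (Fm \<alpha> 1 - Fm \<alpha> 0) + \<epsilon> * (Fm \<alpha> 2 - Fm \<alpha> 1)) + \<epsilon> * (Fm \<alpha> t - Fm \<alpha> 2)"
    using thin_small[OF a th, of 0] thin_small[OF a th, of 1] t(3) by (auto simp: one_add_one)
  also have "\<dots> = \<epsilon> * Fm \<alpha> t" using F0 by (simp add: algebra_simps)
  finally show ?thesis using t by blast
qed



lemma low1:
  fixes a b q :: real
  assumes a: "0 < a" and ab: "a \<le> b" and q: "1 \<le> q"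
  shows "(b - a) * a powr (q-1) \<le> b powr q - a powr q"
proof -
  have m: "a powr (q-1) \<le> b powr (q-1)" using powr_mono2[of "q-1" a b] a ab q by linarith
  have "b powr q = b * b powr (q-1)" using a ab powr_mult_base[of b "q-1"] by simp
  moreover have "a powr q = a * a powr (q-1)" using a powr_mult_base[of a "q-1"] by simp
  moreover have "b * a powr (q-1) \<le> b * b powr (q-1)" using m a ab by (intro mult_left_mono) auto
  ultimately show ?thesis by (simp add: left_diff_distrib)
qed

lemma two_le_powr: fixes q :: real assumes "1 \<le> q" shows "2 \<le> 2 powr q"
  using powr_mono[of 1 q 2] assms by simp

lemma half:
  fixes a b q :: real
  assumes a: "0 \<le> a" and ab: "2 * a \<le> b" and q: "1 \<le> q"
  shows "b powr q / 2 \<le> b powr q - a powr q"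
proof -
  have "a powr q \<le> (b/2) powr q" using powr_mono2[of q a "b/2"] a ab q by linarith
  also have "\<dots> = b powr q / 2 powr q" by (simp add: powr_divide)
  also have "\<dots> \<le> b powr q / 2" using two_le_powr[OF q] by (intro divide_left_mono) auto
  finally show ?thesis by simp
qed

lemma up_mvt:
  fixes a t q :: real
  assumes a: "0 < a" and at: "a \<le> t" and q: "1 \<le> q"
  shows "t powr q - a powr q \<le> q * (t - a) * t powr (q-1)"
proof (cases "a = t")
  case True then show ?thesis by simp
next
  case False
  then have lt: "a < t" using at by simp
  have "\<exists>z. a < z \<and> z < t \<and> t powr q - a powr q = (t - a) * (q * z powr (q-1))"
    by (rule MVT2[OF lt]) (use a in \<open>auto intro: has_real_derivative_powr\<close>)
  then obtain z where z: "a < z" "z < t" "t powr q - a powr q = (t - a) * (q * z powr (q-1))" by blast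
  have "z powr (q-1) \<le> t powr (q-1)" using powr_mono2[of "q-1" z t] z a q by linarith
  then have "(t - a) * (q * z powr (q-1)) \<le> (t - a) * (q * t powr (q-1))"
    using lt q by (intro mult_left_mono) auto
  then show ?thesis using z by (simp add: algebra_simps)
qed

definition Cq :: "real \<Rightarrow> real" where "Cq q = 2 * 5 powr q + 2 * q * 3 powr q"

lemma Cq_ge: assumes "1 \<le> q" shows "2 * 5 powr q \<le> Cq q" "2 * q * 3 powr q \<le> Cq q"
  using assms unfolding Cq_def by auto

lemma ineq1:
  fixes a b t q :: real
  assumes q: "1 \<le> q" and a: "1 \<le> a" and b: "a + 1/a \<le> b" and t: "b \<le> t" "t \<le> b + 1/a"
  shows "t powr q - a powr q \<le> Cq q * (b powr q - a powr q)"
proof (cases "2 * a \<le> b")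
  case True
  have h: "b powr q / 2 \<le> b powr q - a powr q" using half[OF _ True q] a by simp
  have ia: "0 < 1/a" using a by simp
  have "1/a \<le> b" using a b ia by linarith
  then have t5: "t \<le> 5 * b" using t by linarith
  have "0 \<le> t" using a b t ia by linarith
  then have "t powr q \<le> (5*b) powr q" using powr_mono2[of q t "5*b"] q t5 by linarith
  also have "\<dots> = 5 powr q * b powr q" using a b by (simp add: powr_mult)
  also have "\<dots> \<le> 5 powr q * (2 * (b powr q - a powr q))" using h by (intro mult_left_mono) auto
  also have "\<dots> = (2 * 5 powr q) * (b powr q - a powr q)" by simp
  also have "\<dots> \<le> Cq q * (b powr q - a powr q)"
    using Cq_ge[OF q] h powr_ge_zero[of a q] by (intro mult_right_mono) linarith+
  finally show ?thesis using powr_ge_zero[of a q] by linarith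
next
  case False
  have a0: "0 < a" using a by simp
  have ia: "0 < 1/a" using a0 by simp
  have ab: "a \<le> b" using b ia by linarith
  have l: "(b - a) * a powr (q-1) \<le> b powr q - a powr q" using low1[OF a0 ab q] .
  have ta: "t - a \<le> 2 * (b - a)" using t b by (smt (verit))
  have t3: "t \<le> 3 * a" using ta False by (smt (verit))
  have "t powr q - a powr q \<le> q * (t - a) * t powr (q-1)" by (rule up_mvt[OF a0 _ q]) (use ab t in linarith)
  also have "\<dots> \<le> q * (2 * (b - a)) * (3 powr q * a powr (q-1))"
  proof (rule mult_mono)
    show "q * (t - a) \<le> q * (2 * (b - a))" using ta q by (intro mult_left_mono) auto
    have "t powr (q-1) \<le> (3*a) powr (q-1)" using powr_mono2[of "q-1" t "3*a"] t3 q ab t a0 by linarith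
    also have "\<dots> = 3 powr (q-1) * a powr (q-1)" using a0 by (simp add: powr_mult)
    also have "\<dots> \<le> 3 powr q * a powr (q-1)" by (intro mult_right_mono powr_mono) auto
    finally show "t powr (q-1) \<le> 3 powr q * a powr (q-1)" .
  qed (use q ab in auto)
  also have "\<dots> = (2 * q * 3 powr q) * ((b - a) * a powr (q-1))" by (simp add: algebra_simps)
  also have "\<dots> \<le> (2 * q * 3 powr q) * (b powr q - a powr q)" using l q by (intro mult_left_mono) auto
  also have "\<dots> \<le> Cq q * (b powr q - a powr q)"
    using Cq_ge[OF q] powr_mono2[of q a b] q ab a0 by (intro mult_right_mono) linarith+
  finally show ?thesis .
qed

lemma ineq2:
  fixes a b t q :: real
  assumes q: "1 \<le> q" and a: "1 \<le> a" "a \<le> 2" and b: "a + 1/a \<le> b" and b2: "2 \<le> b" and t: "0 \<le> t" "t \<le> b + 1/2"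
  shows "t powr q \<le> Cq q * (b powr q - a powr q)"
proof (cases "4 \<le> b")
  case True
  have h: "b powr q / 2 \<le> b powr q - a powr q" using half[OF _ _ q, of a b] a True by simp
  have "t powr q \<le> (5*b) powr q" using powr_mono2[of q t "5*b"] q t True by linarith
  also have "\<dots> = 5 powr q * b powr q" using True by (simp add: powr_mult)
  also have "\<dots> \<le> 5 powr q * (2 * (b powr q - a powr q))" using h by (intro mult_left_mono) auto
  also have "\<dots> = (2 * 5 powr q) * (b powr q - a powr q)" by simp
  also have "\<dots> \<le> Cq q * (b powr q - a powr q)"
    using Cq_ge[OF q] h powr_ge_zero[of a q] by (intro mult_right_mono) linarith+
  finally show ?thesis .
next
  case False
  have a0: "0 < a" using a by simp
  have "1/2 \<le> 1/a" using a by (intro divide_left_mono) auto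
  then have ba: "1/2 \<le> b - a" using b by linarith
  have ab: "a \<le> b" using ba by linarith
  have h1: "1 \<le> a powr (q-1)" using ge_one_powr_ge_zero[of a "q-1"] a q by linarith
  have "(1/2) * 1 \<le> (b - a) * a powr (q-1)" 
    by (rule mult_mono) (use ba h1 in linarith)+
  then have "1/2 \<le> (b - a) * a powr (q-1)" by simp
  then have l: "1/2 \<le> b powr q - a powr q" using low1[OF a0 ab q] by linarith
  have "t powr q \<le> 5 powr q" using powr_mono2[of q t 5] q t False by linarith
  also have "\<dots> = (2 * 5 powr q) * (1/2)" by simp
  also have "\<dots> \<le> (2 * 5 powr q) * (b powr q - a powr q)" using l by (intro mult_left_mono) auto
  also have "\<dots> \<le> Cq q * (b powr q - a powr q)"
    using Cq_ge[OF q] l by (intro mult_right_mono) auto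
  finally show ?thesis .
qed

lemma ineq3:
  fixes b t q :: real
  assumes q: "1 \<le> q" and b: "1 < b" and t: "0 \<le> t" "t \<le> max b 2 + 1/2"
  shows "t powr q \<le> Cq q * b powr q"
proof -
  have "t \<le> 5*b" using t b by (auto simp: max_def split: if_splits)
  then have "t powr q \<le> (5*b) powr q" using powr_mono2[of q t "5*b"] q t by linarith
  also have "\<dots> = 5 powr q * b powr q" using b by (simp add: powr_mult)
  also have "\<dots> \<le> Cq q * b powr q" using Cq_ge[OF q] powr_ge_zero[of 5 q] powr_ge_zero[of b q] by (intro mult_right_mono) linarith+
  finally show ?thesis .
qed


definition kk :: "real \<Rightarrow> real" where "kk \<alpha> = (2*pi) powr (\<alpha>+1) / (2*\<alpha>+2)"

lemma Fm_eq: "Fm \<alpha> t = kk \<alpha> * t powr (2*\<alpha>+2)"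
  unfolding Fm_def kk_def by simp

lemma kk_pos: "\<alpha> > -1/2 \<Longrightarrow> kk \<alpha> > 0"
  unfolding kk_def by (intro divide_pos_pos) auto

lemma scale:
  fixes e k C X Y :: real
  assumes "0 \<le> e" "0 \<le> k" "X \<le> C * Y"
  shows "e * (k * X) \<le> C * e * (k * Y)"
proof -
  have "e * k * X \<le> e * k * (C * Y)" using assms by (intro mult_left_mono) auto
  then show ?thesis by (simp add: ac_simps)
qed

lemma two_le_recip: fixes a :: real assumes "1 \<le> a" shows "2 \<le> a + 1/a"
proof -
  have "0 \<le> (a-1)^2" by simp
  then have "a * (2 - a) \<le> 1" by (simp add: power2_eq_square algebra_simps)
  then have "2 - a \<le> 1/a" using assms by (simp add: le_divide_eq mult.commute)
  then show ?thesis by linarith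
qed

theorem lemma5p2:
  fixes \<alpha> :: real
  assumes "\<alpha> > -1/2"
  shows "\<exists>C::real. \<forall>\<epsilon> S. 0 < \<epsilon> \<and> \<epsilon> < 1 \<and> thin \<epsilon> \<alpha> S \<longrightarrow>
           (\<forall>a b. a \<ge> 1 \<and> b - a \<ge> 1/a \<longrightarrow>
              measure (mu \<alpha>) (S \<inter> {a..b}) \<le> C * \<epsilon> * measure (mu \<alpha>) {a..b}) \<and>
           (\<forall>b. b > 1 \<longrightarrow>
              measure (mu \<alpha>) (S \<inter> {0..b}) \<le> C * \<epsilon> * measure (mu \<alpha>) {0..b})"
proof (rule exI[of _ "Cq (2*\<alpha>+2)"], intro allI impI)
  note al = assms
  define q where "q = 2*\<alpha>+2"
  have q: "1 \<le> q" using al unfolding q_def by linarith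
  have k0: "0 \<le> kk \<alpha>" using kk_pos[OF al] by simp
  fix \<epsilon> S assume h: "0 < \<epsilon> \<and> \<epsilon> < 1 \<and> thin \<epsilon> \<alpha> S"
  then have e: "0 < \<epsilon>" and th: "thin \<epsilon> \<alpha> S" by auto
  have Sm: "S \<in> sets lborel" using thin_sets[OF th] .
  {
    fix a b :: real assume ab: "a \<ge> 1 \<and> b - a \<ge> 1/a"
    then have a1: "1 \<le> a" and b: "a + 1/a \<le> b" by auto
    have ia: "0 < 1/a" using a1 by simp
    have aleb: "a \<le> b" using b ia by linarith
    have mab: "measure (mu \<alpha>) {a..b} = kk \<alpha> * (b powr q - a powr q)"
      using meas_interval[OF al _ aleb] a1 unfolding Fm_eq q_def by (simp add: right_diff_distrib)
    have "measure (mu \<alpha>) (S \<inter> {a..b}) \<le> Cq (2*\<alpha>+2) * \<epsilon> * measure (mu \<alpha>) {a..b}"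
    proof (cases "2 \<le> a")
      case True
      obtain t where t: "b \<le> t" "t \<le> b + 1/a" "measure (mu \<alpha>) (S \<inter> {a..b}) \<le> \<epsilon> * (Fm \<alpha> t - Fm \<alpha> a)"
        using greedy[OF al th e True aleb] by blast
      have "Fm \<alpha> t - Fm \<alpha> a = kk \<alpha> * (t powr q - a powr q)"
        unfolding Fm_eq q_def by (simp add: right_diff_distrib)
      moreover have "\<epsilon> * (kk \<alpha> * (t powr q - a powr q)) \<le> Cq q * \<epsilon> * (kk \<alpha> * (b powr q - a powr q))"
        by (rule scale) (use e k0 ineq1[OF q a1 b t(1) t(2)] in auto)
      ultimately show ?thesis using t(3) mab unfolding q_def by simp
    next
      case False
      have b2: "2 \<le> b" using two_le_recip[OF a1] b by linarith
      obtain t where t: "b \<le> t" "t \<le> b + 1/2" "measure (mu \<alpha>) (S \<inter> {0..b}) \<le> \<epsilon> * Fm \<alpha> t"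
        using initial[OF al th e b2] by blast
      have "measure (mu \<alpha>) (S \<inter> {a..b}) \<le> measure (mu \<alpha>) (S \<inter> {0..b})"
        by (rule meas_mono[OF al, of 0 _ _ b]) (use Sm a1 in auto)
      moreover have "\<epsilon> * (kk \<alpha> * (t powr q)) \<le> Cq q * \<epsilon> * (kk \<alpha> * (b powr q - a powr q))"
        by (rule scale) (use e k0 ineq2[OF q a1 _ b b2 _ t(2)] False b2 t(1) in auto)
      ultimately show ?thesis using t(3) mab unfolding q_def Fm_eq by simp
    qed
  }
  then have P1: "(\<forall>a b. a \<ge> 1 \<and> b - a \<ge> 1/a \<longrightarrow>
              measure (mu \<alpha>) (S \<inter> {a..b}) \<le> Cq (2*\<alpha>+2) * \<epsilon> * measure (mu \<alpha>) {a..b})" by blast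
  {
    fix b :: real assume b: "b > 1"
    define B where "B = max b 2"
    have B2: "2 \<le> B" unfolding B_def by simp
    have mb: "measure (mu \<alpha>) {0..b} = kk \<alpha> * b powr q"
      using meas_interval[OF al, of 0 b] b unfolding Fm_eq q_def by simp
    obtain t where t: "B \<le> t" "t \<le> B + 1/2" "measure (mu \<alpha>) (S \<inter> {0..B}) \<le> \<epsilon> * Fm \<alpha> t"
      using initial[OF al th e B2] by blast
    have "measure (mu \<alpha>) (S \<inter> {0..b}) \<le> measure (mu \<alpha>) (S \<inter> {0..B})"
      by (rule meas_mono[OF al, of 0 _ _ B]) (use Sm in \<open>auto simp: B_def\<close>)
    moreover have "\<epsilon> * (kk \<alpha> * (t powr q)) \<le> Cq q * \<epsilon> * (kk \<alpha> * (b powr q))"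
      by (rule scale) (use e k0 ineq3[OF q b _ t(2)[unfolded B_def]] B2 t(1) in auto)
    ultimately have "measure (mu \<alpha>) (S \<inter> {0..b}) \<le> Cq (2*\<alpha>+2) * \<epsilon> * measure (mu \<alpha>) {0..b}"
      using t(3) mb unfolding q_def Fm_eq by simp
  }
  then have P2: "(\<forall>b. b > 1 \<longrightarrow>
              measure (mu \<alpha>) (S \<inter> {0..b}) \<le> Cq (2*\<alpha>+2) * \<epsilon> * measure (mu \<alpha>) {0..b})" by blast
  from P1 P2 show "(\<forall>a b. a \<ge> 1 \<and> b - a \<ge> 1/a \<longrightarrow>
              measure (mu \<alpha>) (S \<inter> {a..b}) \<le> Cq (2*\<alpha>+2) * \<epsilon> * measure (mu \<alpha>) {a..b}) \<and>
           (\<forall>b. b > 1 \<longrightarrow>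
              measure (mu \<alpha>) (S \<inter> {0..b}) \<le> Cq (2*\<alpha>+2) * \<epsilon> * measure (mu \<alpha>) {0..b})" by (rule conjI)
qed

end
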